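(* Let $\mathsf{CMP}$ be the set of linear processes $P$ that are complete, let $\mathsf{LF}$ be the set of lock-free processes, and let $\mathsf{PSL} = \{P \in \mathsf{CMP} \mid \mathrm{psl}(P)\}$ be the set of potentially self-locking complete processes (all notions as defined in the context). Then $$\mathsf{PSL} = \mathsf{CMP} \setminus \mathsf{LF}.$$
   Context: Fix a countable set $\mathcal{N}$ of names $a,b,\dots$ and a disjoint set $\overline{\mathcal{N}}$ of co-names with a bijection $a\mapsto \bar a$, extended by $\bar{\bar a}=a$; actions $\alpha$ range over $\mathcal{N}\cup\overline{\mathcal{N}}$. Processes are given by $P,Q,R ::= \mathbf{0} \mid \alpha.P \mid P \,|\, Q$ (finite CCS with prefix and parallel composition only). Evaluation contexts: $E ::= [-] \mid P\,|\,E \mid E\,|\,P$; process contexts: $C ::= [-] \mid P\,|\,C \mid C\,|\,P \mid \alpha.C$; $C[Q]$ denotes filling the hole with $Q$. Structural congruence $\equiv$ is the smallest congruence with $P|\mathbf{0}\equiv P$, $P|Q\equiv Q|P$, $P|(Q|R)\equiv (P|Q)|R$. Reduction $\to$ is the smallest relation with $a.P \,|\, \bar a.Q \to P\,|\,Q$, closed under evaluation contexts ($P\to P'$ implies $E[P]\to E[P']$) and under $\equiv$ ($P\equiv P'\to Q'\equiv Q$ implies $P\to Q$); $\to^*$ is its reflexive–transitive closure. A process is linear if no name occurs more than once as an input $a$ and no more than once as an output $\bar a$ (so each name occurs at most twice). Predicates: $\mathrm{in}(a,P)$ iff $\exists P',P''.\ P\equiv P'\,|\,a.P''$; $\mathrm{out}(a,P)$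 iff $\exists P',P''.\ P\equiv P'\,|\,\bar a.P''$; $\mathrm{sync}(a,P)$ iff $\mathrm{in}(a,P)$ and $\mathrm{out}(a,P)$; $\mathrm{wait}(a,P)$ iff exactly one of $\mathrm{in}(a,P)$, $\mathrm{out}(a,P)$ holds. Lock-freedom: $\mathrm{lf}(P)$ iff for all $Q$ and $a$, if $P\to^* Q$ and $\mathrm{wait}(a,Q)$ then there exists $R$ with $Q\to^* R$ and $\mathrm{sync}(a,R)$; $\mathsf{LF}=\{P\mid \mathrm{lf}(P)\}$. Completeness: $\mathrm{cin}(a,P)$ iff there exist a process context $C$ and $Q$ with $P\equiv C[Q]$ and $\mathrm{in}(a,Q)$; $\mathrm{cout}(a,P)$ likewise with $\mathrm{out}(a,Q)$; $\mathrm{complete}(P)$ iff for all $a$, $\mathrm{cin}(a,P) \Leftrightarrow \mathrm{cout}(a,P)$; $\mathsf{CMP}$ is the set of linear processes $P$ with $\mathrm{complete}(P)$. Deadlock: $\mathrm{dl}(P)$ iff there is no $Q$ with $P\to Q$ and $P\not\equiv\mathbf{0}$. Top-completeness: $\mathrm{tcomplete}(P)$ iff for all $a$, ($\mathrm{in}(a,P)$ implies $\mathrm{cout}(a,P)$) and ($\mathrm{out}(a,P)$ implies $\mathrm{cin}(a,P)$). Self-deadlock: $\mathrm{sdl}(P)$ iff $\mathrm{dl}(P)$ and $\mathrm{tcomplete}(P)$. Potential self-locking: $\mathrm{psl}(P)$ iff there exist an evaluation context $E$ and a process $Q$ with $P\to^* E[Q]$ and $\mathrm{sdl}(Q)$.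 *)

theory Defs
  imports Main
begin

datatype act = In nat | Out nat

fun co :: "act \<Rightarrow> act" where
  "co (In a) = Out a" | "co (Out a) = In a"

datatype proc = Nil | Pre act proc | Par proc proc

datatype ectx = EHole | EParL proc ectx | EParR ectx proc

fun efill :: "ectx \<Rightarrow> proc \<Rightarrow> proc" where
  "efill EHole Q = Q"
| "efill (EParL P E) Q = Par P (efill E Q)"
| "efill (EParR E P) Q = Par (efill E Q) P"

datatype pctx = CHole | CParL proc pctx | CParR pctx proc | CPre act pctx

fun cfill :: "pctx \<Rightarrow> proc \<Rightarrow> proc" where
  "cfill CHole Q = Q"
| "cfill (CParL P C) Q = Par P (cfill C Q)"
| "cfill (CParR C P) Q = Par (cfill C Q) P"
| "cfill (CPre \<alpha> C) Q = Pre \<alpha> (cfill C Q)"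

inductive scong :: "proc \<Rightarrow> proc \<Rightarrow> bool" (infix "\<equiv>\<^sub>s" 50) where
  par_nil: "Par P Nil \<equiv>\<^sub>s P"
| par_comm: "Par P Q \<equiv>\<^sub>s Par Q P"
| par_assoc: "Par P (Par Q R) \<equiv>\<^sub>s Par (Par P Q) R"
| refl: "P \<equiv>\<^sub>s P"
| sym: "P \<equiv>\<^sub>s Q \<Longrightarrow> Q \<equiv>\<^sub>s P"
| trans: "P \<equiv>\<^sub>s Q \<Longrightarrow> Q \<equiv>\<^sub>s R \<Longrightarrow> P \<equiv>\<^sub>s R"
| cong_pre: "P \<equiv>\<^sub>s Q \<Longrightarrow> Pre \<alpha> P \<equiv>\<^sub>s Pre \<alpha> Q"
| cong_par: "P \<equiv>\<^sub>s P' \<Longrightarrow> Q \<equiv>\<^sub>s Q' \<Longrightarrow> Par P Q \<equiv>\<^sub>s Par P' Q'"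

inductive red :: "proc \<Rightarrow> proc \<Rightarrow> bool" where
  comm: "red (Par (Pre (In a) P) (Pre (Out a) Q)) (Par P Q)"
| ectx: "red P P' \<Longrightarrow> red (efill E P) (efill E P')"
| struct: "P \<equiv>\<^sub>s P' \<Longrightarrow> red P' Q' \<Longrightarrow> Q' \<equiv>\<^sub>s Q \<Longrightarrow> red P Q"

abbreviation reds :: "proc \<Rightarrow> proc \<Rightarrow> bool" where
  "reds \<equiv> red\<^sup>*\<^sup>*"

fun occ :: "act \<Rightarrow> proc \<Rightarrow> nat" where
  "occ \<alpha> Nil = 0"
| "occ \<alpha> (Pre \<beta> P) = (if \<alpha> = \<beta> then 1 else 0) + occ \<alpha> P"
| "occ \<alpha> (Par P Q) = occ \<alpha> P + occ \<alpha> Q"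

definition linear :: "proc \<Rightarrow> bool" where
  "linear P \<longleftrightarrow> (\<forall>a. occ (In a) P \<le> 1 \<and> occ (Out a) P \<le> 1)"

definition inp :: "nat \<Rightarrow> proc \<Rightarrow> bool" where
  "inp a P \<longleftrightarrow> (\<exists>P' P''. P \<equiv>\<^sub>s Par P' (Pre (In a) P''))"

definition outp :: "nat \<Rightarrow> proc \<Rightarrow> bool" where
  "outp a P \<longleftrightarrow> (\<exists>P' P''. P \<equiv>\<^sub>s Par P' (Pre (Out a) P''))"

definition sync :: "nat \<Rightarrow> proc \<Rightarrow> bool" where
  "sync a P \<longleftrightarrow> inp a P \<and> outp a P"

definition wait :: "nat \<Rightarrow> proc \<Rightarrow> bool" where
  "wait a P \<longleftrightarrow> (inp a P \<noteq> outp a P)"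

definition lf :: "proc \<Rightarrow> bool" where
  "lf P \<longleftrightarrow> (\<forall>Q a. reds P Q \<and> wait a Q \<longrightarrow> (\<exists>R. reds Q R \<and> sync a R))"

definition LF :: "proc set" where
  "LF = {P. lf P}"

definition cin :: "nat \<Rightarrow> proc \<Rightarrow> bool" where
  "cin a P \<longleftrightarrow> (\<exists>C Q. P \<equiv>\<^sub>s cfill C Q \<and> inp a Q)"

definition cout :: "nat \<Rightarrow> proc \<Rightarrow> bool" where
  "cout a P \<longleftrightarrow> (\<exists>C Q. P \<equiv>\<^sub>s cfill C Q \<and> outp a Q)"

definition complete :: "proc \<Rightarrow> bool" where
  "complete P \<longleftrightarrow> (\<forall>a. cin a P \<longleftrightarrow> cout a P)"

definition CMP :: "proc set" where
  "CMP = {P. linear P \<and> complete P}"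

definition dl :: "proc \<Rightarrow> bool" where
  "dl P \<longleftrightarrow> \<not> (\<exists>Q. red P Q) \<and> \<not> (P \<equiv>\<^sub>s Nil)"

definition tcomplete :: "proc \<Rightarrow> bool" where
  "tcomplete P \<longleftrightarrow> (\<forall>a. (inp a P \<longrightarrow> cout a P) \<and> (outp a P \<longrightarrow> cin a P))"

definition sdl :: "proc \<Rightarrow> bool" where
  "sdl P \<longleftrightarrow> dl P \<and> tcomplete P"

definition psl :: "proc \<Rightarrow> bool" where
  "psl P \<longleftrightarrow> (\<exists>E Q. reds P (efill E Q) \<and> sdl Q)"

definition PSL :: "proc set" where
  "PSL = {P \<in> CMP. psl P}"

end

theory Submission
  imports Defs
begin

declare scong.trans[trans]

lemma nil_l: "Par Nil P \<equiv>\<^sub>s P"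
  by (meson scong.par_comm scong.par_nil scong.trans)

fun tocc :: "act \<Rightarrow> proc \<Rightarrow> nat" where
  "tocc \<alpha> Nil = 0"
| "tocc \<alpha> (Pre \<beta> P) = (if \<alpha> = \<beta> then 1 else 0)"
| "tocc \<alpha> (Par P Q) = tocc \<alpha> P + tocc \<alpha> Q"

fun gocc :: "act set \<Rightarrow> act \<Rightarrow> proc \<Rightarrow> nat" where
  "gocc G \<beta> Nil = 0"
| "gocc G \<beta> (Pre \<gamma> P) = (if \<gamma> \<in> G then occ \<beta> P else gocc G \<beta> P)"
| "gocc G \<beta> (Par P Q) = gocc G \<beta> P + gocc G \<beta> Q"

fun psz :: "proc \<Rightarrow> nat" where
  "psz Nil = 0" | "psz (Pre a P) = Suc (psz P)" | "psz (Par P Q) = psz P + psz Q"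

lemma scong_inv:
  assumes "P \<equiv>\<^sub>s Q"
  shows "(\<forall>a. occ a P = occ a Q) \<and> (\<forall>a. tocc a P = tocc a Q) \<and> (\<forall>G b. gocc G b P = gocc G b Q) \<and> psz P = psz Q"
  using assms by (induction rule: scong.induct) auto

lemma scong_occ: "P \<equiv>\<^sub>s Q \<Longrightarrow> occ a P = occ a Q" using scong_inv by blast
lemma scong_tocc: "P \<equiv>\<^sub>s Q \<Longrightarrow> tocc a P = tocc a Q" using scong_inv by blast
lemma scong_gocc: "P \<equiv>\<^sub>s Q \<Longrightarrow> gocc G b P = gocc G b Q" using scong_inv by blast
lemma scong_psz: "P \<equiv>\<^sub>s Q \<Longrightarrow> psz P = psz Q" using scong_inv by blast

fun ectxp :: "ectx \<Rightarrow> proc" where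
  "ectxp EHole = Nil" | "ectxp (EParL P E) = Par P (ectxp E)" | "ectxp (EParR E P) = Par (ectxp E) P"

lemma efill_decomp: "efill E P \<equiv>\<^sub>s Par (ectxp E) P"
proof (induction E)
  case EHole then show ?case using nil_l scong.sym by simp
next
  case (EParL Q E)
  have "Par Q (efill E P) \<equiv>\<^sub>s Par Q (Par (ectxp E) P)" by (rule scong.cong_par[OF scong.refl EParL])
  also have "... \<equiv>\<^sub>s Par (Par Q (ectxp E)) P" by (rule scong.par_assoc)
  finally show ?case by simp
next
  case (EParR E Q)
  have "Par (efill E P) Q \<equiv>\<^sub>s Par (Par (ectxp E) P) Q" by (rule scong.cong_par[OF EParR scong.refl])
  also have "... \<equiv>\<^sub>s Par Q (Par (ectxp E) P)" by (rule scong.par_comm)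
  also have "... \<equiv>\<^sub>s Par (Par Q (ectxp E)) P" by (rule scong.par_assoc)
  also have "... \<equiv>\<^sub>s Par (Par (ectxp E) Q) P" by (rule scong.cong_par[OF scong.par_comm scong.refl])
  finally show ?case by simp
qed

lemma red_decomp:
  assumes "red P Q"
  shows "\<exists>b X Y Z. P \<equiv>\<^sub>s Par Z (Par (Pre (In b) X) (Pre (Out b) Y)) \<and> Q \<equiv>\<^sub>s Par Z (Par X Y)"
  using assms
proof (induction rule: red.induct)
  case (comm a P Q)
  then show ?case using nil_l scong.sym by blast
next
  case (ectx P P' E)
  then obtain b X Y Z where h: "P \<equiv>\<^sub>s Par Z (Par (Pre (In b) X) (Pre (Out b) Y))" "P' \<equiv>\<^sub>s Par Z (Par X Y)" by blast
  have a: "efill E K \<equiv>\<^sub>s Par (Par (ectxp E) Z) W" if "K \<equiv>\<^sub>s Par Z W" for K W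
  proof -
    have "efill E K \<equiv>\<^sub>s Par (ectxp E) K" by (rule efill_decomp)
    also have "... \<equiv>\<^sub>s Par (ectxp E) (Par Z W)" by (rule scong.cong_par[OF scong.refl that])
    also have "... \<equiv>\<^sub>s Par (Par (ectxp E) Z) W" by (rule scong.par_assoc)
    finally show ?thesis .
  qed
  show ?case using a[OF h(1)] a[OF h(2)] by blast
next
  case (struct P P' Q' Q)
  then obtain b X Y Z where h: "P' \<equiv>\<^sub>s Par Z (Par (Pre (In b) X) (Pre (Out b) Y))" "Q' \<equiv>\<^sub>s Par Z (Par X Y)" by blast
  have "P \<equiv>\<^sub>s Par Z (Par (Pre (In b) X) (Pre (Out b) Y))" using struct(1) h(1) by (rule scong.trans)
  moreover have "Q \<equiv>\<^sub>s Par Z (Par X Y)" using scong.sym[OF struct(3)] h(2) by (rule scong.trans)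
  ultimately show ?case by blast
qed

lemma tocc_split: "tocc \<alpha> P > 0 \<Longrightarrow> \<exists>P' P''. P \<equiv>\<^sub>s Par P' (Pre \<alpha> P'')"
proof (induction P)
  case Nil then show ?case by simp
next
  case (Pre b P) then show ?case using nil_l[of "Pre b P"] scong.sym by (auto split: if_splits)
next
  case (Par P Q)
  show ?case
  proof (cases "tocc \<alpha> P > 0")
    case True
    then obtain A B where h: "P \<equiv>\<^sub>s Par A (Pre \<alpha> B)" using Par by blast
    have "Par P Q \<equiv>\<^sub>s Par (Par A (Pre \<alpha> B)) Q" using h by (simp add: scong.cong_par scong.refl)
    also have "... \<equiv>\<^sub>s Par Q (Par A (Pre \<alpha> B))" by (rule scong.par_comm)
    also have "... \<equiv>\<^sub>s Par (Par Q A) (Pre \<alpha> B)" by (rule scong.par_assoc)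
    finally show ?thesis by blast
  next
    case False
    then have "tocc \<alpha> Q > 0" using Par.prems by simp
    then obtain A B where h: "Q \<equiv>\<^sub>s Par A (Pre \<alpha> B)" using Par by blast
    have "Par P Q \<equiv>\<^sub>s Par P (Par A (Pre \<alpha> B))" using h by (simp add: scong.cong_par scong.refl)
    also have "... \<equiv>\<^sub>s Par (Par P A) (Pre \<alpha> B)" by (rule scong.par_assoc)
    finally show ?thesis by blast
  qed
qed

lemma inp_tocc: "inp a P \<longleftrightarrow> tocc (In a) P > 0"
proof
  assume "inp a P"
  then obtain A B where "P \<equiv>\<^sub>s Par A (Pre (In a) B)" unfolding inp_def by blast
  then show "tocc (In a) P > 0" using scong_tocc by fastforce
next
  assume "tocc (In a) P > 0" then show "inp a P" unfolding inp_def using tocc_split by blast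
qed

lemma outp_tocc: "outp a P \<longleftrightarrow> tocc (Out a) P > 0"
proof
  assume "outp a P"
  then obtain A B where "P \<equiv>\<^sub>s Par A (Pre (Out a) B)" unfolding outp_def by blast
  then show "tocc (Out a) P > 0" using scong_tocc by fastforce
next
  assume "tocc (Out a) P > 0" then show "outp a P" unfolding outp_def using tocc_split by blast
qed

lemma tocc_le_occ: "tocc a P \<le> occ a P"
  by (induction P) auto

lemma gocc_le_occ: "gocc G a P \<le> occ a P"
  by (induction P) auto

lemma tgo: "tocc a P + gocc G a P \<le> occ a P"
  by (induction P) (auto simp: gocc_le_occ)

lemma gocc_full: "(\<forall>g. tocc g Q > 0 \<longrightarrow> g \<in> G) \<Longrightarrow> gocc G b Q + tocc b Q = occ b Q"
proof (induction Q)
  case (Pre g P)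
  then have "g \<in> G" by (metis tocc.simps(2) zero_less_one)
  then show ?case by auto
qed auto

lemma occ_cfill: "occ a Q \<le> occ a (cfill C Q)"
  by (induction C) auto

lemma occ_split: "occ a P > 0 \<Longrightarrow> \<exists>C X. P = cfill C (Pre a X)"
proof (induction P)
  case (Pre b P)
  show ?case
  proof (cases "a = b")
    case True then show ?thesis by (metis cfill.simps(1))
  next
    case False
    then obtain C X where "P = cfill C (Pre a X)" using Pre by auto
    then show ?thesis by (metis cfill.simps(4))
  qed
next
  case (Par P Q)
  show ?case
  proof (cases "occ a P > 0")
    case True
    then obtain C X where "P = cfill C (Pre a X)" using Par by auto
    then show ?thesis by (metis cfill.simps(3))
  next
    case False
    then have "occ a Q > 0" using Par.prems by simp
    then obtain C X where "Q = cfill C (Pre a X)" using Par by auto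
    then show ?thesis by (metis cfill.simps(2))
  qed
qed simp

lemma cin_occ: "cin a P \<longleftrightarrow> occ (In a) P > 0"
proof
  assume "cin a P"
  then obtain C Q where h: "P \<equiv>\<^sub>s cfill C Q" "inp a Q" unfolding cin_def by blast
  have "tocc (In a) Q > 0" using h(2) inp_tocc by blast
  then have "occ (In a) Q > 0" using tocc_le_occ[of "In a" Q] by linarith
  then show "occ (In a) P > 0" using occ_cfill[of "In a" Q C] scong_occ[OF h(1), of "In a"] by linarith
next
  assume "occ (In a) P > 0"
  then obtain C X where "P = cfill C (Pre (In a) X)" using occ_split by blast
  moreover have "inp a (Pre (In a) X)" using inp_tocc by simp
  ultimately show "cin a P" unfolding cin_def using scong.refl by blast
qed

lemma cout_occ: "cout a P \<longleftrightarrow> occ (Out a) P > 0"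
proof
  assume "cout a P"
  then obtain C Q where h: "P \<equiv>\<^sub>s cfill C Q" "outp a Q" unfolding cout_def by blast
  have "tocc (Out a) Q > 0" using h(2) outp_tocc by blast
  then have "occ (Out a) Q > 0" using tocc_le_occ[of "Out a" Q] by linarith
  then show "occ (Out a) P > 0" using occ_cfill[of "Out a" Q C] scong_occ[OF h(1), of "Out a"] by linarith
next
  assume "occ (Out a) P > 0"
  then obtain C X where "P = cfill C (Pre (Out a) X)" using occ_split by blast
  moreover have "outp a (Pre (Out a) X)" using outp_tocc by simp
  ultimately show "cout a P" unfolding cout_def using scong.refl by blast
qed

lemma red_exists:
  assumes "tocc (In a) P > 0" "tocc (Out a) P > 0"
  shows "\<exists>Q. red P Q"
proof -
  obtain P1 X where h1: "P \<equiv>\<^sub>s Par P1 (Pre (In a) X)" using tocc_split[OF assms(1)] by blast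
  have "tocc (Out a) P1 > 0" using assms(2) scong_tocc[OF h1, of "Out a"] by simp
  then obtain P2 Y where h2: "P1 \<equiv>\<^sub>s Par P2 (Pre (Out a) Y)" using tocc_split by blast
  have "P \<equiv>\<^sub>s Par P1 (Pre (In a) X)" by (rule h1)
  also have "... \<equiv>\<^sub>s Par (Par P2 (Pre (Out a) Y)) (Pre (In a) X)" by (rule scong.cong_par[OF h2 scong.refl])
  also have "... \<equiv>\<^sub>s Par P2 (Par (Pre (Out a) Y) (Pre (In a) X))" by (rule scong.sym[OF scong.par_assoc])
  also have "... \<equiv>\<^sub>s Par P2 (Par (Pre (In a) X) (Pre (Out a) Y))" by (rule scong.cong_par[OF scong.refl scong.par_comm])
  finally have e: "P \<equiv>\<^sub>s Par P2 (Par (Pre (In a) X) (Pre (Out a) Y))" .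
  have "red (efill (EParL P2 EHole) (Par (Pre (In a) X) (Pre (Out a) Y))) (efill (EParL P2 EHole) (Par X Y))"
    by (rule red.ectx[OF red.comm])
  then have "red (Par P2 (Par (Pre (In a) X) (Pre (Out a) Y))) (Par P2 (Par X Y))" by simp
  then have "red P (Par P2 (Par X Y))" using red.struct[OF e _ scong.refl] by blast
  then show ?thesis by blast
qed

lemma red_occ:
  assumes "red R S"
  shows "\<exists>b. tocc (In b) R \<ge> 1 \<and> tocc (Out b) R \<ge> 1 \<and>
    (\<forall>\<alpha>. occ \<alpha> R = occ \<alpha> S + (if \<alpha> = In b \<or> \<alpha> = Out b then 1 else 0)) \<and> psz R = psz S + 2"
proof -
  obtain b X Y Z where d: "R \<equiv>\<^sub>s Par Z (Par (Pre (In b) X) (Pre (Out b) Y))" "S \<equiv>\<^sub>s Par Z (Par X Y)"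
    using red_decomp[OF assms] by blast
  show ?thesis
    apply (rule exI[of _ b])
    using scong_occ[OF d(1)] scong_occ[OF d(2)] scong_tocc[OF d(1)] scong_psz[OF d(1)] scong_psz[OF d(2)]
    by auto
qed

lemma nf_exists: "\<exists>N. reds P N \<and> \<not>(\<exists>S. red N S)"
proof (induction "psz P" arbitrary: P rule: less_induct)
  case less
  show ?case
  proof (cases "\<exists>S. red P S")
    case True
    then obtain S where s: "red P S" by blast
    then have "psz S < psz P" using red_occ by fastforce
    then obtain N where "reds S N" "\<not>(\<exists>S. red N S)" using less by blast
    then show ?thesis using s by (meson converse_rtranclp_into_rtranclp)
  next
    case False then show ?thesis by blast
  qed
qed

lemma red_cmp:
  assumes "red R S" "linear R" "complete R"
  shows "linear S \<and> complete S"
proof -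
  obtain b where b: "tocc (In b) R \<ge> 1" "tocc (Out b) R \<ge> 1"
    "\<And>\<alpha>. occ \<alpha> R = occ \<alpha> S + (if \<alpha> = In b \<or> \<alpha> = Out b then 1 else 0)"
    using red_occ[OF assms(1)] by blast
  have lS: "linear S" using assms(2) b(3) unfolding linear_def by (metis le_add1 order_trans)
  have "occ (In b) R \<le> 1" "occ (Out b) R \<le> 1" using assms(2) unfolding linear_def by auto
  then have z: "occ (In b) S = 0" "occ (Out b) S = 0" using b(3)[of "In b"] b(3)[of "Out b"] by auto
  have "cin a S \<longleftrightarrow> cout a S" for a
  proof (cases "a = b")
    case True then show ?thesis using z cin_occ cout_occ by simp
  next
    case False
    then have "occ (In a) S = occ (In a) R" "occ (Out a) S = occ (Out a) R" using b(3) by auto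
    then show ?thesis using assms(3) unfolding complete_def by (simp add: cin_occ cout_occ)
  qed
  then show ?thesis using lS unfolding complete_def by blast
qed

lemma reds_cmp:
  assumes "reds R S" "linear R" "complete R"
  shows "linear S \<and> complete S"
  using assms by (induction rule: rtranclp_induct) (auto dest: red_cmp)

lemma reds_lin:
  assumes "reds R S" "linear R"
  shows "linear S"
  using assms
proof (induction rule: rtranclp_induct)
  case (step y z)
  then obtain b where "\<And>\<alpha>. occ \<alpha> y = occ \<alpha> z + (if \<alpha> = In b \<or> \<alpha> = Out b then 1 else 0)"
    using red_occ by blast
  then show ?case using step unfolding linear_def by (metis le_add1 order_trans)
qed simp

definition J :: "act set \<Rightarrow> proc \<Rightarrow> bool" where
 "J T R \<longleftrightarrow> (\<forall>\<alpha>\<in>T. tocc \<alpha> R \<ge> 1 \<and> gocc T (co \<alpha>) R = occ (co \<alpha>) R)"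

lemma J_red: assumes "J T R" "red R S" shows "J T S"
proof -
  obtain b X Y Z where d: "R \<equiv>\<^sub>s Par Z (Par (Pre (In b) X) (Pre (Out b) Y))" "S \<equiv>\<^sub>s Par Z (Par X Y)"
    using red_decomp[OF assms(2)] by blast
  note o = scong_occ[OF d(1)] scong_occ[OF d(2)] scong_tocc[OF d(1)] scong_tocc[OF d(2)]
       scong_gocc[OF d(1)] scong_gocc[OF d(2)]
  have key: "tocc (co \<alpha>) R = 0" if "\<alpha> \<in> T" for \<alpha>
    using assms(1) that tgo[of "co \<alpha>" R T] unfolding J_def by auto
  have t1: "tocc (In b) R \<ge> 1" "tocc (Out b) R \<ge> 1" using o by auto
  have nI: "In b \<notin> T" using key[of "In b"] t1 by auto
  have nO: "Out b \<notin> T" using key[of "Out b"] t1 by auto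
  show ?thesis unfolding J_def
  proof
    fix \<alpha> assume a: "\<alpha> \<in> T"
    have ne: "\<alpha> \<noteq> In b" "\<alpha> \<noteq> Out b" using a nI nO by auto
    have ne2: "co \<alpha> \<noteq> In b" "co \<alpha> \<noteq> Out b" using key[OF a] t1 by auto
    have "tocc \<alpha> R \<ge> 1" "gocc T (co \<alpha>) R = occ (co \<alpha>) R" using assms(1) a unfolding J_def by auto
    then show "tocc \<alpha> S \<ge> 1 \<and> gocc T (co \<alpha>) S = occ (co \<alpha>) S"
      using o ne ne2 nI nO by auto
  qed
qed

lemma reds_J: "reds R S \<Longrightarrow> J T R \<Longrightarrow> J T S"
  by (induction rule: rtranclp_induct) (auto dest: J_red)

lemma tocc_zero: "(\<forall>\<alpha>. tocc \<alpha> Q = 0) \<Longrightarrow> Q \<equiv>\<^sub>s Nil"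
proof (induction Q)
  case Nil then show ?case by (simp add: scong.refl)
next
  case (Pre b P) then show ?case by (metis tocc.simps(2) one_neq_zero)
next
  case (Par P Q)
  then have "P \<equiv>\<^sub>s Nil" "Q \<equiv>\<^sub>s Nil" by auto
  then have "Par P Q \<equiv>\<^sub>s Par Nil Nil" by (rule scong.cong_par)
  also have "... \<equiv>\<^sub>s Nil" by (rule scong.par_nil)
  finally show ?case .
qed

lemma psl_not_lf:
  assumes lin: "linear P" and ps: "psl P"
  shows "\<not> lf P"
proof -
  obtain E Q where r: "reds P (efill E Q)" and sd: "sdl Q" using ps unfolding psl_def by blast
  define R0 where "R0 = efill E Q"
  define T where "T = {\<alpha>. tocc \<alpha> Q > 0}"
  have linR0: "linear R0" using reds_lin[OF r lin] R0_def by simp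
  have nr: "\<not> (\<exists>S. red Q S)" and nn: "\<not> Q \<equiv>\<^sub>s Nil" using sd unfolding sdl_def dl_def by auto
  have tc: "tcomplete Q" using sd unfolding sdl_def by auto
  obtain \<alpha>0 where a0: "\<alpha>0 \<in> T" using nn tocc_zero[of Q] unfolding T_def by auto
  have nb: "tocc (co \<alpha>) Q = 0" if "\<alpha> \<in> T" for \<alpha>
  proof (cases \<alpha>)
    case (In a) then show ?thesis using that nr red_exists[of a Q] unfolding T_def by auto
  next
    case (Out a) then show ?thesis using that nr red_exists[of a Q] unfolding T_def by auto
  qed
  have oc: "occ (co \<alpha>) Q > 0" if "\<alpha> \<in> T" for \<alpha>
  proof (cases \<alpha>)
    case (In a)
    then have "inp a Q" using that inp_tocc unfolding T_def by auto
    then have "cout a Q" using tc unfolding tcomplete_def by blast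
    then show ?thesis using In cout_occ by simp
  next
    case (Out a)
    then have "outp a Q" using that outp_tocc unfolding T_def by auto
    then have "cin a Q" using tc unfolding tcomplete_def by blast
    then show ?thesis using Out cin_occ by simp
  qed
  have full: "gocc T b Q + tocc b Q = occ b Q" for b
    by (rule gocc_full) (auto simp: T_def)
  have J0: "J T R0" unfolding J_def
  proof
    fix \<alpha> assume a: "\<alpha> \<in> T"
    note e = efill_decomp[of E Q, folded R0_def]
    have l1: "occ (co \<alpha>) R0 \<le> 1" using linR0 unfolding linear_def by (cases \<alpha>) auto
    have "occ (co \<alpha>) R0 = occ (co \<alpha>) (ectxp E) + occ (co \<alpha>) Q" using scong_occ[OF e] by simp
    then have z: "occ (co \<alpha>) (ectxp E) = 0" using l1 oc[OF a] by linarith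
    then have z2: "gocc T (co \<alpha>) (ectxp E) = 0" using gocc_le_occ[of T "co \<alpha>" "ectxp E"] by linarith
    show "tocc \<alpha> R0 \<ge> 1 \<and> gocc T (co \<alpha>) R0 = occ (co \<alpha>) R0"
      using scong_occ[OF e, of "co \<alpha>"] scong_tocc[OF e, of \<alpha>] scong_gocc[OF e, of T "co \<alpha>"]
        z z2 full[of "co \<alpha>"] nb[OF a] a unfolding T_def by auto
  qed
  have inv: "tocc \<alpha>0 R \<ge> 1 \<and> tocc (co \<alpha>0) R = 0" if "reds R0 R" for R
  proof -
    have "J T R" using reds_J[OF that J0] .
    then show ?thesis using a0 tgo[of "co \<alpha>0" R T] unfolding J_def by auto
  qed
  obtain a where "\<alpha>0 = In a \<or> \<alpha>0 = Out a" by (cases \<alpha>0) auto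
  then have w: "\<And>R. reds R0 R \<Longrightarrow> wait a R \<and> \<not> sync a R"
    using inv unfolding wait_def sync_def inp_tocc outp_tocc by fastforce
  show ?thesis unfolding lf_def using r w[of R0] w R0_def
    by (metis rtranclp.rtrancl_refl rtranclp_trans)
qed

lemma not_lf_psl:
  assumes cmp: "P \<in> CMP" and nlf: "\<not> lf P"
  shows "psl P"
proof -
  obtain Q a where q: "reds P Q" "wait a Q" and ns: "\<And>R. reds Q R \<Longrightarrow> \<not> sync a R"
    using nlf unfolding lf_def by blast
  obtain \<alpha> where al: "\<alpha> = In a \<or> \<alpha> = Out a" "tocc \<alpha> Q > 0"
    using q(2) unfolding wait_def inp_tocc outp_tocc by auto
  have inv: "tocc \<alpha> R > 0" if "reds Q R" for R
    using that
  proof (induction rule: rtranclp_induct)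
    case base then show ?case using al by simp
  next
    case (step y z)
    obtain b X Y Z where d: "y \<equiv>\<^sub>s Par Z (Par (Pre (In b) X) (Pre (Out b) Y))" "z \<equiv>\<^sub>s Par Z (Par X Y)"
      using red_decomp[OF step(2)] by blast
    note o = scong_tocc[OF d(1)] scong_tocc[OF d(2)]
    have "b \<noteq> a"
    proof
      assume "b = a"
      then have "sync a y" unfolding sync_def inp_tocc outp_tocc using o by auto
      then show False using ns step(1) by blast
    qed
    then show ?case using o step(3) al(1) by auto
  qed
  obtain N where n: "reds Q N" "\<not>(\<exists>S. red N S)" using nf_exists by blast
  have pn: "reds P N" using q(1) n(1) by simp
  have cN: "linear N \<and> complete N" using reds_cmp[OF pn] cmp unfolding CMP_def by auto
  have "\<not> N \<equiv>\<^sub>s Nil" using inv[OF n(1)] scong_tocc[of N Nil \<alpha>] by auto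
  then have "dl N" using n(2) unfolding dl_def by blast
  moreover have "tcomplete N" unfolding tcomplete_def
  proof (intro allI conjI impI)
    fix c assume "inp c N"
    then have "cin c N" unfolding inp_tocc cin_occ using tocc_le_occ[of "In c" N] by linarith
    then show "cout c N" using cN unfolding complete_def by blast
  next
    fix c assume "outp c N"
    then have "cout c N" unfolding outp_tocc cout_occ using tocc_le_occ[of "Out c" N] by linarith
    then show "cin c N" using cN unfolding complete_def by blast
  qed
  ultimately have "sdl N" unfolding sdl_def by blast
  then show ?thesis unfolding psl_def using pn by (metis efill.simps(1))
qed

theorem theorem1:
  shows "PSL = CMP - LF"
  unfolding PSL_def LF_def using psl_not_lf not_lf_psl unfolding CMP_def by blast

end
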